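(* Let $\varepsilon\ge0$, let $N>2$ and $J$ be integers with $0\le J<N$, let $m,M\in(0,1)$ with $m\le M$, and let $c\in[m,M]$. Define $f\colon[m,M]^{N-J}\to\mathbb{R}$ by \[ f(a_1,\dots,a_{N-J})=\Big(e^{\varepsilon}-(e^{\varepsilon}-1)\frac{m+Jc+S}{N+1}\Big)\prod_{i=1}^{N-J}\Bigg(N+\frac{1-a_i}{1-\frac{\min\{m+(N-1)M,\ (N-2)(a_i-m)+Jc+S\}}{N}}\Bigg), \] where $S=\sum_{i=1}^{N-J}a_i$. Then for all $(a_1,\dots,a_{N-J})\in[m,M]^{N-J}$, \[ f(a_1,\dots,a_{N-J})\le\max\Big\{\max_{t\in[m,U_{N-J-1}]}f_{\mathrm{diag}}(t),\ \max_{k\in\{0,1,\dots,N-J\}}\max_{t\in[m,U_k]}f_k(t)\Big\}, \] where \[ f_{\mathrm{diag}}(t)=\Big(e^{\varepsilon}-(e^{\varepsilon}-1)\frac{m+Jc+(N-J)t}{N+1}\Big)\Bigg(N+\frac{1-t}{1-\frac{(2N-J-2)t-(N-2)m+Jc}{N}}\Bigg)^{N-J}, \] and, for $k\in\{0,1,\dots,N-J\}$, \[ f_k(t)=\Big(e^{\varepsilon}-(e^{\varepsilon}-1)\frac{m+S_k(t)}{N+1}\Big)\Bigg(N+\frac{1-t}{1-\frac{(N-2)(t-m)+S_k(t)}{N}}\Bigg)\Bigg(N+\frac{1-m}{1-\frac{S_k(t)}{N}}\Bigg)^{N-J-k-1}\Bigg(N+\frac{1-B_k(t)}{1-\frac{m+(N-1)M}{N}}\Bigg)^{k},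 \] with $S_k(t)=Jc+t+(N-J-k-1)m+kB_k(t)$, \[ B_k(t)=\frac{(N-1)(M+m)-(Jc+(N-J-k-1)m+t)}{N+k-2},\qquad U_k=\frac{(N-1)(M+m)-(Jc+(N-J-k-1)m)}{N+k-1}. \] *)

theory Defs
  imports Complex_Main
begin

definition pref :: "real \<Rightarrow> nat \<Rightarrow> real \<Rightarrow> real" where
  "pref eps N x = exp eps - (exp eps - 1) * x / (real N + 1)"

text \<open>f(a_1,...,a_{N-J}); coordinates a_1..a_{N-J} are stored as a 0 .. a (N-J-1).\<close>
definition fval :: "real \<Rightarrow> nat \<Rightarrow> nat \<Rightarrow> real \<Rightarrow> real \<Rightarrow> real \<Rightarrow> (nat \<Rightarrow> real) \<Rightarrow> real" where
  "fval eps N J m M c a =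
     (let S = (\<Sum>i<N - J. a i) in
       pref eps N (m + real J * c + S) *
       (\<Prod>i<N - J. real N + (1 - a i) /
          (1 - min (m + (real N - 1) * M) ((real N - 2) * (a i - m) + real J * c + S) / real N)))"

definition fdiag :: "real \<Rightarrow> nat \<Rightarrow> nat \<Rightarrow> real \<Rightarrow> real \<Rightarrow> real \<Rightarrow> real" where
  "fdiag eps N J m c t =
     pref eps N (m + real J * c + (real N - real J) * t) *
     (real N + (1 - t) /
        (1 - ((2 * real N - real J - 2) * t - (real N - 2) * m + real J * c) / real N)) ^ (N - J)"

definition Bk :: "nat \<Rightarrow> nat \<Rightarrow> real \<Rightarrow> real \<Rightarrow> real \<Rightarrow> nat \<Rightarrow> real \<Rightarrow> real" where
  "Bk N J m M c k t =
     ((real N - 1) * (M + m) - (real J * c + (real N - real J - real k - 1) * m + t))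
       / (real N + real k - 2)"

definition Uk :: "nat \<Rightarrow> nat \<Rightarrow> real \<Rightarrow> real \<Rightarrow> real \<Rightarrow> nat \<Rightarrow> real" where
  "Uk N J m M c k =
     ((real N - 1) * (M + m) - (real J * c + (real N - real J - real k - 1) * m))
       / (real N + real k - 1)"

definition Sk :: "nat \<Rightarrow> nat \<Rightarrow> real \<Rightarrow> real \<Rightarrow> real \<Rightarrow> nat \<Rightarrow> real \<Rightarrow> real" where
  "Sk N J m M c k t =
     real J * c + t + (real N - real J - real k - 1) * m + real k * Bk N J m M c k t"

text \<open>The exponent N-J-k-1 may equal -1 (when k = N-J), hence an integer power.\<close>
definition fk :: "real \<Rightarrow> nat \<Rightarrow> nat \<Rightarrow> real \<Rightarrow> real \<Rightarrow> real \<Rightarrow> nat \<Rightarrow> real \<Rightarrow> real" where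
  "fk eps N J m M c k t =
     pref eps N (m + Sk N J m M c k t) *
     (real N + (1 - t) / (1 - ((real N - 2) * (t - m) + Sk N J m M c k t) / real N)) *
     (real N + (1 - m) / (1 - Sk N J m M c k t / real N))
        powi (int N - int J - int k - 1) *
     (real N + (1 - Bk N J m M c k t) / (1 - (m + (real N - 1) * M) / real N)) ^ k"

end

theory Submission
  imports Defs "HOL-Analysis.Analysis"
begin

lemma mob_deriv:
  fixes R K x :: real
  assumes K: "K > 0" and Q: "R + K * (1 - x) > 0" and x1: "x < 1"
  shows "((\<lambda>x. ln (R + (K+1) * (1 - x)) - ln (R + K * (1 - x))) has_real_derivative
          (- R / ((R + (K+1) * (1 - x)) * (R + K * (1 - x))))) (at x)"
proof -
  have P: "R + (K+1) * (1 - x) > 0" using Q x1 by (smt (verit) distrib_right mult_pos_pos)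
  have "((\<lambda>x. ln (R + (K+1) * (1 - x)) - ln (R + K * (1 - x))) has_real_derivative
          ((- (K+1)) / (R + (K+1) * (1 - x)) - (- K) / (R + K * (1 - x)))) (at x)"
    using P Q by (auto intro!: derivative_eq_intros)
  moreover have "(- (K+1)) / (R + (K+1) * (1 - x)) - (- K) / (R + K * (1 - x))
      = - R / ((R + (K+1) * (1 - x)) * (R + K * (1 - x)))"
    using P Q by (simp add: field_simps)
  ultimately show ?thesis by simp
qed

lemma mob_prod_mono:
  fixes R K x y :: real
  assumes K: "K > 0" and Qy: "R + K * (1 - y) > 0" and y1: "y < 1" and xy: "x \<le> y"
  shows "(R + (K+1) * (1 - y)) * (R + K * (1 - y)) \<le> (R + (K+1) * (1 - x)) * (R + K * (1 - x))"
proof -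
  have Py: "R + (K+1) * (1 - y) > 0" using Qy y1 by (smt (verit) distrib_right mult_pos_pos)
  have a: "R + K * (1 - y) \<le> R + K * (1 - x)" using K xy by (simp add: mult_left_mono)
  have b: "R + (K+1) * (1 - y) \<le> R + (K+1) * (1 - x)" using K xy by (simp add: mult_left_mono)
  show ?thesis by (rule mult_mono[OF b a]) (use Py Qy b a in linarith)+
qed

lemma mob_convex:
  fixes R K lo hi :: real
  assumes K: "K > 0" and R: "R \<le> 0" and Q: "\<And>x. x \<in> {lo..hi} \<Longrightarrow> R + K * (1 - x) > 0 \<and> x < 1"
  shows "convex_on {lo..hi} (\<lambda>x. ln (R + (K+1) * (1 - x)) - ln (R + K * (1 - x)))"
proof (rule convex_on_realI)
  show "connected {lo..hi}" by simp
  fix x assume "x \<in> {lo..hi}"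
  then show "((\<lambda>x. ln (R + (K+1) * (1 - x)) - ln (R + K * (1 - x))) has_real_derivative
          (- R / ((R + (K+1) * (1 - x)) * (R + K * (1 - x))))) (at x)"
    using mob_deriv[OF K] Q by blast
next
  fix x y assume xy: "x \<in> {lo..hi}" "y \<in> {lo..hi}" "x \<le> y"
  have Qy: "R + K * (1 - y) > 0" "y < 1" using Q xy by auto
  have Py: "R + (K+1) * (1 - y) > 0" using Qy by (smt (verit) distrib_right mult_pos_pos)
  have pos: "0 < (R + (K+1) * (1 - y)) * (R + K * (1 - y))" using Py Qy by simp
  have m: "(R + (K+1) * (1 - y)) * (R + K * (1 - y)) \<le> (R + (K+1) * (1 - x)) * (R + K * (1 - x))"
    using mob_prod_mono[OF K Qy xy(3)] .
  show "- R / ((R + (K+1) * (1 - x)) * (R + K * (1 - x))) \<le> - R / ((R + (K+1) * (1 - y)) * (R + K * (1 - y)))"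
  proof -
    have "(-R) / ((R + (K+1) * (1 - x)) * (R + K * (1 - x))) \<le> (-R) / ((R + (K+1) * (1 - y)) * (R + K * (1 - y)))"
      by (rule divide_left_mono[OF m]) (use R pos m in auto)
    then show ?thesis by simp
  qed
qed

lemma mob_concave:
  fixes R K lo hi :: real
  assumes K: "K > 0" and R: "R \<ge> 0" and Q: "\<And>x. x \<in> {lo..hi} \<Longrightarrow> R + K * (1 - x) > 0 \<and> x < 1"
  shows "concave_on {lo..hi} (\<lambda>x. ln (R + (K+1) * (1 - x)) - ln (R + K * (1 - x)))"
  unfolding concave_on_def
proof (rule convex_on_realI)
  show "connected {lo..hi}" by simp
  fix x assume "x \<in> {lo..hi}"
  then have "((\<lambda>x. ln (R + (K+1) * (1 - x)) - ln (R + K * (1 - x))) has_real_derivative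
          (- R / ((R + (K+1) * (1 - x)) * (R + K * (1 - x))))) (at x)"
    using mob_deriv[OF K] Q by blast
  then show "((\<lambda>x. - (ln (R + (K+1) * (1 - x)) - ln (R + K * (1 - x)))) has_real_derivative
          (- (- R / ((R + (K+1) * (1 - x)) * (R + K * (1 - x)))))) (at x)"
    by (rule DERIV_minus)
next
  fix x y assume xy: "x \<in> {lo..hi}" "y \<in> {lo..hi}" "x \<le> y"
  have Qy: "R + K * (1 - y) > 0" "y < 1" using Q xy by auto
  have Py: "R + (K+1) * (1 - y) > 0" using Qy by (smt (verit) distrib_right mult_pos_pos)
  have pos: "0 < (R + (K+1) * (1 - y)) * (R + K * (1 - y))" using Py Qy by simp
  have m: "(R + (K+1) * (1 - y)) * (R + K * (1 - y)) \<le> (R + (K+1) * (1 - x)) * (R + K * (1 - x))"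
    using mob_prod_mono[OF K Qy xy(3)] .
  show "- (- R / ((R + (K+1) * (1 - x)) * (R + K * (1 - x)))) \<le> - (- R / ((R + (K+1) * (1 - y)) * (R + K * (1 - y))))"
  proof -
    have "R / ((R + (K+1) * (1 - x)) * (R + K * (1 - x))) \<le> R / ((R + (K+1) * (1 - y)) * (R + K * (1 - y)))"
      by (rule divide_left_mono[OF m]) (use R pos m in auto)
    then show ?thesis by simp
  qed
qed

lemma ln_affine_concave:
  fixes p q lo hi :: real
  assumes "\<And>x. x \<in> {lo..hi} \<Longrightarrow> p + q * x > 0"
  shows "concave_on {lo..hi} (\<lambda>x. ln (p + q * x))"
  unfolding concave_on_def
proof (rule convex_on_realI)
  show "connected {lo..hi}" by simp
  fix x assume "x \<in> {lo..hi}"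
  then have pos: "p + q * x > 0" using assms by blast
  show "((\<lambda>x. - ln (p + q * x)) has_real_derivative (- (q / (p + q * x)))) (at x)"
    using pos by (auto intro!: derivative_eq_intros)
next
  fix x y assume xy: "x \<in> {lo..hi}" "y \<in> {lo..hi}" "x \<le> y"
  have px: "p + q * x > 0" and py: "p + q * y > 0" using assms xy by auto
  have "q * (p + q * x) \<le> q * (p + q * y)"
  proof -
    have "q * (p + q * y) - q * (p + q * x) = q * q * (y - x)" by (simp add: algebra_simps)
    moreover have "q * q * (y - x) \<ge> 0" using xy(3) by simp
    ultimately show ?thesis by linarith
  qed
  then show "- (q / (p + q * x)) \<le> - (q / (p + q * y))"
    using px py by (simp add: field_simps)
qed

lemma concave_on_min:
  assumes "concave_on S f" "concave_on S g"
  shows "concave_on S (\<lambda>x. min (f x) (g x))"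
proof -
  have cS: "convex S" using assms(1) concave_on_imp_convex by blast
  show ?thesis unfolding concave_on_iff
  proof (intro conjI cS ballI allI impI)
    fix x y u v :: real
    fix x y assume xy: "x \<in> S" "y \<in> S"
    fix u v :: real assume uv: "u \<ge> 0" "v \<ge> 0" "u + v = 1"
    have f: "f (u *\<^sub>R x + v *\<^sub>R y) \<ge> u * f x + v * f y" using assms(1) xy uv unfolding concave_on_iff by blast
    have g: "g (u *\<^sub>R x + v *\<^sub>R y) \<ge> u * g x + v * g y" using assms(2) xy uv unfolding concave_on_iff by blast
    have "u * min (f x) (g x) + v * min (f y) (g y) \<le> u * f x + v * f y"
      using uv by (intro add_mono mult_left_mono) auto
    moreover have "u * min (f x) (g x) + v * min (f y) (g y) \<le> u * g x + v * g y"
      using uv by (intro add_mono mult_left_mono) auto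
    ultimately show "u * min (f x) (g x) + v * min (f y) (g y) \<le> min (f (u *\<^sub>R x + v *\<^sub>R y)) (g (u *\<^sub>R x + v *\<^sub>R y))"
      using f g by linarith
  qed
qed

lemma jensen_concave:
  fixes a :: "nat \<Rightarrow> real" and \<psi> :: "real \<Rightarrow> real"
  assumes "concave_on C \<psi>" "n > 0" "\<And>i. i < n \<Longrightarrow> a i \<in> C"
  shows "(\<Sum>i<n. \<psi> (a i)) \<le> real n * \<psi> ((\<Sum>i<n. a i) / real n)"
proof -
  have "\<psi> (\<Sum>i\<in>{..<n}. (1 / real n) *\<^sub>R a i) \<ge> (\<Sum>i\<in>{..<n}. (1 / real n) * \<psi> (a i))"
    by (rule concave_on_sum[OF _ _ assms(1)]) (use assms(2,3) in auto)
  moreover have "(\<Sum>i\<in>{..<n}. (1 / real n) *\<^sub>R a i) = (\<Sum>i<n. a i) / real n"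
    by (simp add: sum_divide_distrib)
  moreover have "(\<Sum>i\<in>{..<n}. (1 / real n) * \<psi> (a i)) = (\<Sum>i<n. \<psi> (a i)) / real n"
    by (simp add: sum_divide_distrib)
  ultimately have "(\<Sum>i<n. \<psi> (a i)) / real n \<le> \<psi> ((\<Sum>i<n. a i) / real n)" by simp
  then show ?thesis using assms(2) by (simp add: field_simps)
qed


lemma chord2:
  fixes \<phi> :: "real \<Rightarrow> real"
  assumes conv: "convex_on {lo..hi} \<phi>" and u: "u \<in> {lo..hi}" and v: "v \<in> {lo..hi}" and s: "u + v = lo + hi"
  shows "\<phi> u + \<phi> v \<le> \<phi> lo + \<phi> hi"
proof (cases "lo < hi")
  case True
  have "\<phi> u \<le> (\<phi> hi - \<phi> lo) / (hi - lo) * (u - lo) + \<phi> lo" using convex_onD_Icc'[OF conv u] by simp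
  moreover have "\<phi> v \<le> (\<phi> hi - \<phi> lo) / (hi - lo) * (v - lo) + \<phi> lo" using convex_onD_Icc'[OF conv v] by simp
  moreover have "(\<phi> hi - \<phi> lo) / (hi - lo) * (u - lo) + (\<phi> hi - \<phi> lo) / (hi - lo) * (v - lo) = \<phi> hi - \<phi> lo"
  proof -
    have e: "(u - lo) + (v - lo) = hi - lo" using s by simp
    have "(\<phi> hi - \<phi> lo) / (hi - lo) * (u - lo) + (\<phi> hi - \<phi> lo) / (hi - lo) * (v - lo)
        = (\<phi> hi - \<phi> lo) / (hi - lo) * (hi - lo)" by (metis distrib_left e)
    then show ?thesis using True by simp
  qed
  ultimately show ?thesis by linarith
next
  case False
  then have "u = lo" "v = lo" "hi = lo" using u v by auto
  then show ?thesis by simp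
qed

lemma twoA:
  fixes \<phi> :: "real \<Rightarrow> real"
  assumes conv: "convex_on {m..th} \<phi>" and mono: "\<And>x y. m \<le> x \<Longrightarrow> x \<le> y \<Longrightarrow> y \<le> th \<Longrightarrow> \<phi> x \<le> \<phi> y"
    and u: "u \<in> {m..th}" and v: "v \<in> {m..th}" and w: "u + v \<le> w" "w \<le> m + th"
  shows "\<phi> u + \<phi> v \<le> \<phi> m + \<phi> (w - m)"
proof -
  define z where "z = u + v - m"
  have z: "z \<in> {m..th}" "z \<le> w - m" using u v w by (auto simp: z_def)
  have c: "convex_on {m..z} \<phi>" by (rule convex_on_subset[OF conv]) (use z in auto)
  have "\<phi> u + \<phi> v \<le> \<phi> m + \<phi> z" by (rule chord2[OF c]) (use u v in \<open>auto simp: z_def\<close>)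
  also have "\<phi> z \<le> \<phi> (w - m)" by (rule mono) (use z w u v in auto)
  finally show ?thesis by simp
qed

lemma twoB:
  fixes \<phi> :: "real \<Rightarrow> real"
  assumes conv: "convex_on {m..th} \<phi>" and mono: "\<And>x y. m \<le> x \<Longrightarrow> x \<le> y \<Longrightarrow> y \<le> th \<Longrightarrow> \<phi> x \<le> \<phi> y"
    and u: "u \<in> {m..th}" and v: "v \<in> {m..th}" and w: "u + v \<le> w" "w \<le> 2 * th" "m + th \<le> w"
  shows "\<phi> u + \<phi> v \<le> \<phi> th + \<phi> (w - th)"
proof (cases "u + v \<le> m + th")
  case True
  have "\<phi> u + \<phi> v \<le> \<phi> m + \<phi> (u + v - m)" by (rule twoA[OF conv mono u v]) (use True in auto)
  also have "\<phi> m \<le> \<phi> (w - th)" by (rule mono) (use w u in auto)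
  also have "\<phi> (u + v - m) \<le> \<phi> th" by (rule mono) (use True u v in auto)
  finally show ?thesis by simp
next
  case False
  define z where "z = u + v - th"
  have z: "z \<in> {m..th}" "z \<le> w - th" using u v w False by (auto simp: z_def)
  have c: "convex_on {z..th} \<phi>" by (rule convex_on_subset[OF conv]) (use z in auto)
  have "\<phi> u + \<phi> v \<le> \<phi> z + \<phi> th" by (rule chord2[OF c]) (use u v in \<open>auto simp: z_def\<close>)
  also have "\<phi> z \<le> \<phi> (w - th)" by (rule mono) (use z w u v in auto)
  finally show ?thesis by simp
qed

lemma maj:
  fixes \<phi> :: "real \<Rightarrow> real" and x :: "nat \<Rightarrow> real"
  assumes conv: "convex_on {m..th} \<phi>" and mono: "\<And>x y. m \<le> x \<Longrightarrow> x \<le> y \<Longrightarrow> y \<le> th \<Longrightarrow> \<phi> x \<le> \<phi> y"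
  shows "n > 0 \<Longrightarrow> (\<forall>i<n. x i \<in> {m..th}) \<Longrightarrow> (\<Sum>i<n. x i) \<le> s \<Longrightarrow> s \<le> real n * th \<Longrightarrow>
    \<exists>k t. k < n \<and> t \<in> {m..th} \<and> (real n - real k - 1) * m + t + real k * th = s \<and>
      (\<Sum>i<n. \<phi> (x i)) \<le> (real n - real k - 1) * \<phi> m + \<phi> t + real k * \<phi> th"
proof (induction n arbitrary: s)
  case 0
  then show ?case by simp
next
  case (Suc n)
  show ?case
  proof (cases "n = 0")
    case True
    have x0: "x 0 \<in> {m..th}" using Suc.prems by auto
    have s: "x 0 \<le> s" "s \<le> th" using Suc.prems True by auto
    have "\<phi> (x 0) \<le> \<phi> s" by (rule mono) (use x0 s in auto)
    then show ?thesis using True x0 s by (intro exI[of _ 0] exI[of _ s]) auto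
  next
    case False
    define s' where "s' = min (s - x n) (real n * th)"
    have xn: "x n \<in> {m..th}" using Suc.prems by auto
    have xs: "\<forall>i<n. x i \<in> {m..th}" using Suc.prems by auto
    have sumle: "(\<Sum>i<n. x i) \<le> real n * th"
    proof -
      have "(\<Sum>i<n. x i) \<le> (\<Sum>i<n. th)" by (rule sum_mono) (use xs in auto)
      then show ?thesis by simp
    qed
    have "(\<Sum>i<n. x i) \<le> s'" using Suc.prems(3) sumle by (simp add: s'_def)
    moreover have "s' \<le> real n * th" by (simp add: s'_def)
    ultimately obtain k t where k: "k < n" "t \<in> {m..th}" "(real n - real k - 1) * m + t + real k * th = s'"
      and ih: "(\<Sum>i<n. \<phi> (x i)) \<le> (real n - real k - 1) * \<phi> m + \<phi> t + real k * \<phi> th"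
      using Suc.IH[of s'] False xs by auto
    define w where "w = s - s' + t"
    have w1: "t + x n \<le> w" by (simp add: w_def s'_def)
    have w2: "w \<le> 2 * th"
    proof (cases "s - x n \<le> real n * th")
      case True then show ?thesis using xn k by (simp add: w_def s'_def)
    next
      case F: False
      then have "s' = real n * th" by (simp add: s'_def)
      then show ?thesis using Suc.prems(4) k by (simp add: w_def algebra_simps)
    qed
    have sumS: "(\<Sum>i<Suc n. \<phi> (x i)) = (\<Sum>i<n. \<phi> (x i)) + \<phi> (x n)" by simp
    show ?thesis
    proof (cases "w \<le> m + th")
      case True
      have two: "\<phi> t + \<phi> (x n) \<le> \<phi> m + \<phi> (w - m)" by (rule twoA[OF conv mono k(2) xn w1 True])
      show ?thesis
      proof (intro exI[of _ k] exI[of _ "w - m"] conjI)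
        show "k < Suc n" using k by simp
        show "w - m \<in> {m..th}" using True w1 k xn by auto
        show "(real (Suc n) - real k - 1) * m + (w - m) + real k * th = s"
          using k(3) by (simp add: w_def algebra_simps)
        show "(\<Sum>i<Suc n. \<phi> (x i)) \<le> (real (Suc n) - real k - 1) * \<phi> m + \<phi> (w - m) + real k * \<phi> th"
          using sumS ih two by (simp add: algebra_simps)
      qed
    next
      case nle: False
      have mw: "m + th \<le> w" using nle by linarith
      have two: "\<phi> t + \<phi> (x n) \<le> \<phi> th + \<phi> (w - th)" by (rule twoB[OF conv mono k(2) xn w1 w2 mw])
      show ?thesis
      proof (intro exI[of _ "Suc k"] exI[of _ "w - th"] conjI)
        show "Suc k < Suc n" using k by simp
        show "w - th \<in> {m..th}" using nle w2 by auto
        show "(real (Suc n) - real (Suc k) - 1) * m + (w - th) + real (Suc k) * th = s"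
          using k(3) by (simp add: w_def algebra_simps)
        show "(\<Sum>i<Suc n. \<phi> (x i)) \<le> (real (Suc n) - real (Suc k) - 1) * \<phi> m + \<phi> (w - th) + real (Suc k) * \<phi> th"
          using sumS ih two by (simp add: algebra_simps)
      qed
    qed
  qed
qed


lemma g_min:
  fixes N D T y :: real
  assumes "N > 0" "D < N" "T < N" "y \<ge> 0"
  shows "N + y / (1 - min D T / N) = min (N + y / (1 - D / N)) (N + y / (1 - T / N))"
proof (cases "T \<le> D")
  case True
  have "0 < 1 - D / N" using assms by simp
  moreover have "1 - D / N \<le> 1 - T / N" using True assms by (simp add: divide_right_mono)
  ultimately have "y / (1 - T / N) \<le> y / (1 - D / N)" using assms(4) by (intro divide_left_mono) auto
  then show ?thesis using True by (simp add: min_def)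
next
  case False
  have "0 < 1 - T / N" using assms by simp
  moreover have "1 - T / N \<le> 1 - D / N" using False assms by (simp add: divide_right_mono)
  ultimately have "y / (1 - D / N) \<le> y / (1 - T / N)" using assms(4) by (intro divide_left_mono) auto
  then show ?thesis using False by (simp add: min_def)
qed

lemma prod_le_exp:
  fixes f :: "nat \<Rightarrow> real"
  assumes "\<And>i. i < n \<Longrightarrow> f i > 0" "(\<Sum>i<n. ln (f i)) \<le> A"
  shows "(\<Prod>i<n. f i) \<le> exp A"
proof -
  have "ln (\<Prod>i<n. f i) = (\<Sum>i<n. ln (f i))" by (rule ln_prod) (use assms(1) in force)+
  moreover have "(\<Prod>i<n. f i) > 0" by (rule prod_pos) (use assms(1) in auto)
  ultimately show ?thesis using assms(2) by (metis exp_le_cancel_iff exp_ln)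
qed

lemma exp_pow_ln: "y > 0 \<Longrightarrow> exp (real n * ln y) = (y::real) ^ n"
  by (metis exp_ln ln_realpow zero_less_power)

lemma pref_ge1:
  assumes "eps \<ge> 0" "x \<le> real N + 1"
  shows "pref eps N x \<ge> 1"
proof -
  have e: "exp eps - 1 \<ge> 0" using assms(1) by simp
  have "x / (real N + 1) \<le> 1" using assms(2) by simp
  then have "(exp eps - 1) * (x / (real N + 1)) \<le> (exp eps - 1) * 1" using e by (rule mult_left_mono)
  then show ?thesis unfolding pref_def by simp
qed

lemma pref_anti:
  assumes "eps \<ge> 0" "x \<le> y"
  shows "pref eps N y \<le> pref eps N x"
proof -
  have e: "exp eps - 1 \<ge> 0" using assms(1) by simp
  have "x / (real N + 1) \<le> y / (real N + 1)" using assms(2) by (simp add: divide_right_mono)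
  then have "(exp eps - 1) * (x / (real N + 1)) \<le> (exp eps - 1) * (y / (real N + 1))" using e by (rule mult_left_mono)
  then show ?thesis unfolding pref_def by simp
qed


theorem proposition9:
  fixes eps m M c :: real and N J :: nat and a :: "nat \<Rightarrow> real"
  assumes "eps \<ge> 0" and "N > 2" and "J < N"
    and "0 < m" and "m < 1" and "0 < M" and "M < 1" and "m \<le> M"
    and "m \<le> c" and "c \<le> M"
    and "\<forall>i<N - J. a i \<in> {m..M}"
  shows "(\<exists>t\<in>{m..Uk N J m M c (N - J - 1)}. fval eps N J m M c a \<le> fdiag eps N J m c t)
       \<or> (\<exists>k\<le>N - J. \<exists>t\<in>{m..Uk N J m M c k}. fval eps N J m M c a \<le> fk eps N J m M c k t)"
proof -
  note eps = assms(1) and N2 = assms(2) and JN = assms(3) and m0 = assms(4) and m1 = assms(5)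
    and M0 = assms(6) and M1 = assms(7) and mM = assms(8) and mc = assms(9) and cM = assms(10)
  define n where "n = N - J"
  have n0: "n > 0" using JN by (simp add: n_def)
  have rn: "real n = real N - real J" using JN by (simp add: n_def of_nat_diff)
  have rN: "real N > 2" using N2 by simp
  define K where "K = real N - 2"
  have K0: "K > 0" using rN by (simp add: K_def)
  define C where "C = real J * c"
  define D where "D = m + (real N - 1) * M"
  define S where "S = (\<Sum>i<n. a i)"
  have aR: "\<And>i. i < n \<Longrightarrow> m \<le> a i \<and> a i \<le> M" using assms(11) by (auto simp: n_def)
  have S_lo: "real n * m \<le> S"
  proof -
    have "(\<Sum>i<n. m) \<le> S" unfolding S_def by (rule sum_mono) (use aR in auto)
    then show ?thesis by simp
  qed
  have S_hi: "S \<le> real n * M"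
  proof -
    have "S \<le> (\<Sum>i<n. M)" unfolding S_def by (rule sum_mono) (use aR in auto)
    then show ?thesis by simp
  qed
  have C_lo: "real J * m \<le> C" unfolding C_def using mc by (simp add: mult_left_mono)
  have C_hi: "C \<le> real J * M" unfolding C_def using cM by (simp add: mult_left_mono)
  have DN: "D < real N"
  proof -
    have "(real N - 1) * M < (real N - 1) * 1" using M1 rN by (intro mult_strict_left_mono) auto
    then show ?thesis unfolding D_def using m1 by simp
  qed
  have nmM: "real n * m \<le> real n * M" "real J * m \<le> real J * M" "(real n - 1) * m \<le> (real n - 1) * M"
    using mM n0 by (auto intro!: mult_left_mono)
  have sumN: "m + C + S \<le> real N + 1"
  proof -
    have "real n * M \<le> real n" "real J * M \<le> real J" using M1 by (auto intro!: mult_left_le)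
    then show ?thesis using C_hi S_hi m1 rn by linarith
  qed
  have a1: "\<And>i. i < n \<Longrightarrow> a i \<le> 1" using aR M1 by (meson less_imp_le order_trans)
  have a_lt1: "\<And>i. i < n \<Longrightarrow> a i < 1" using aR M1 by (meson le_less_trans)
  define g where "g x = real N + (1 - x) / (1 - min D (K * (x - m) + C + S) / real N)" for x
  define G where "G x = real N + (1 - x) / (1 - D / real N)" for x
  have fval_eq: "fval eps N J m M c a = pref eps N (m + C + S) * (\<Prod>i<n. g (a i))"
    unfolding fval_def Let_def g_def C_def D_def S_def n_def K_def by simp
  have g_le_G: "g x \<le> G x" if "x \<le> 1" for x
  proof -
    have "0 < 1 - D / real N" using DN rN by simp
    moreover have "1 - D / real N \<le> 1 - min D (K * (x - m) + C + S) / real N"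
      using rN by (simp add: divide_right_mono)
    ultimately have "(1 - x) / (1 - min D (K * (x - m) + C + S) / real N) \<le> (1 - x) / (1 - D / real N)"
      using that by (intro divide_left_mono) auto
    then show ?thesis unfolding g_def G_def by simp
  qed
  have g_pos: "g x > 0" if "x \<le> 1" for x
  proof -
    have "0 < 1 - D / real N" using DN rN by simp
    moreover have "1 - D / real N \<le> 1 - min D (K * (x - m) + C + S) / real N"
      using rN by (simp add: divide_right_mono)
    ultimately have "(1 - x) / (1 - min D (K * (x - m) + C + S) / real N) \<ge> 0"
      using that by simp
    then show ?thesis unfolding g_def using rN by simp
  qed
  have G_pos: "G x > 0" if "x \<le> 1" for x
    using g_pos[OF that] g_le_G[OF that] by simp
  have G_anti: "G y \<le> G x" if "x \<le> y" for x y
  proof -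
    have "0 < 1 - D / real N" using DN rN by simp
    then show ?thesis unfolding G_def using that by (simp add: divide_right_mono)
  qed
  define den where "den = real N + real n - 2"
  have den0: "den > 0" using rN n0 by (simp add: den_def)
  define U where "U = Uk N J m M c (n - 1)"
  have U_eq: "den * U = (real N - 1) * (M + m) - C"
  proof -
    have "real (n - 1) = real n - 1" using n0 by (simp add: of_nat_diff)
    then have "U = ((real N - 1) * (M + m) - C) / den"
      unfolding U_def Uk_def den_def C_def using rn by (simp add: algebra_simps)
    then show ?thesis using den0 by simp
  qed
  have NJn: "real N = real J + real n" using rn by simp
  have splitM: "(real N - 1) * M = real J * M + (real n - 1) * M" unfolding NJn by (simp add: algebra_simps)
  have splitm: "(real N - 1) * m = real J * m + (real n - 1) * m" unfolding NJn by (simp add: algebra_simps)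
  have denm: "den * m = (real N - 1) * m + (real n - 1) * m" unfolding den_def by (simp add: algebra_simps)
  have denM: "den * M = (real N - 1) * M + (real n - 1) * M" unfolding den_def by (simp add: algebra_simps)
  have U_eq': "den * U = (real N - 1) * M + (real N - 1) * m - C" using U_eq by (simp add: algebra_simps)
  have U_lo: "m \<le> U"
  proof -
    have "den * m \<le> den * U" using U_eq' C_hi nmM splitM splitm denm by linarith
    then show ?thesis using den0 by simp
  qed
  have U_hi: "U \<le> M"
  proof -
    have "den * U \<le> den * M" using U_eq' C_lo nmM splitM splitm denM by linarith
    then show ?thesis using den0 by simp
  qed
  have U_key: "den * U - K * m + C = D" using U_eq unfolding D_def K_def den_def by (simp add: algebra_simps)
  have fdiag_eq: "fdiag eps N J m c t = pref eps N (m + C + real n * t) *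
       (real N + (1 - t) / (1 - (den * t - K * m + C) / real N)) ^ n" for t
    unfolding fdiag_def C_def den_def K_def n_def using rn n_def by (simp add: algebra_simps)
  show ?thesis
  proof (cases "real n * U \<le> S")
    case True
    define t where "t = S / real n"
    have t_ge: "U \<le> t" using True n0 by (simp add: t_def field_simps)
    have t_le: "t \<le> M" using S_hi n0 by (simp add: t_def field_simps)
    have St: "S = real n * t" using n0 by (simp add: t_def)
    have "(\<Prod>i<n. g (a i)) \<le> (\<Prod>i<n. G (a i))"
      by (rule prod_mono) (simp add: a1 g_le_G g_pos less_imp_le)
    also have "\<dots> \<le> G t ^ n"
    proof -
      have Gaff: "G x = (real N + 1 / (1 - D / real N)) + (- 1 / (1 - D / real N)) * x" for x
        unfolding G_def by (simp add: diff_divide_distrib algebra_simps)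
      have cc: "concave_on {m..M} (\<lambda>x. ln (G x))"
        unfolding Gaff
      proof (rule ln_affine_concave)
        fix x assume "x \<in> {m..M}"
        then have "G x > 0" using G_pos M1 by auto
        then show "0 < real N + 1 / (1 - D / real N) + - 1 / (1 - D / real N) * x" using Gaff by simp
      qed
      have "(\<Sum>i<n. ln (G (a i))) \<le> real n * ln (G ((\<Sum>i<n. a i) / real n))"
        by (rule jensen_concave[OF cc n0]) (use aR in auto)
      then have "(\<Sum>i<n. ln (G (a i))) \<le> real n * ln (G t)" unfolding t_def S_def .
      then have "(\<Prod>i<n. G (a i)) \<le> exp (real n * ln (G t))"
        by (intro prod_le_exp) (use G_pos a1 in auto)
      also have "\<dots> = G t ^ n" using G_pos[of t] t_le M1 by (intro exp_pow_ln) auto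
      finally show ?thesis .
    qed
    finally have P1: "(\<Prod>i<n. g (a i)) \<le> G t ^ n" .
    have P2: "G t ^ n \<le> G U ^ n"
      by (rule power_mono[OF G_anti[OF t_ge]]) (use G_pos[of t] t_le M1 in auto)
    have pr: "pref eps N (m + C + S) \<le> pref eps N (m + C + real n * U)"
      by (rule pref_anti[OF eps]) (use True in auto)
    have pr0: "pref eps N (m + C + S) \<ge> 0" using pref_ge1[OF eps sumN] by simp
    have "fval eps N J m M c a \<le> pref eps N (m + C + S) * G U ^ n"
      unfolding fval_eq using P1 P2 pr0 by (intro mult_left_mono) auto
    also have "\<dots> \<le> pref eps N (m + C + real n * U) * G U ^ n"
      by (rule mult_right_mono[OF pr]) (use G_pos[of U] U_hi M1 in auto)
    also have "\<dots> = fdiag eps N J m c U"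
      unfolding fdiag_eq U_key G_def ..
    finally show ?thesis using U_lo unfolding U_def n_def by auto
  next
    case SU: False
    define t0 where "t0 = S / real n"
    have St0: "S = real n * t0" using n0 by (simp add: t0_def)
    have t0_lo: "m \<le> t0" using S_lo n0 by (simp add: t0_def field_simps)
    have t0_U: "t0 < U" using SU n0 by (simp add: t0_def field_simps)
    have t0_M: "t0 \<le> M" using t0_U U_hi by simp
    have denK: "den = K + real n" unfolding den_def K_def by simp
    have Tt0: "K * (t0 - m) + C + S = den * t0 - K * m + C" unfolding St0 denK by (simp add: algebra_simps)
    have Tt0D: "K * (t0 - m) + C + S < D"
    proof -
      have "den * t0 < den * U" using t0_U den0 by simp
      then show ?thesis using Tt0 U_key by linarith
    qed
    define R where "R = 2 - C - S + K * m"
    define Q where "Q x = R + K * (1 - x)" for x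
    define P where "P x = R + (K + 1) * (1 - x)" for x
    define h where "h x = real N + (1 - x) / (1 - (K * (x - m) + C + S) / real N)" for x
    have QT: "Q x = real N - (K * (x - m) + C + S)" for x unfolding Q_def R_def K_def by (simp add: algebra_simps)
    have PQ: "P x = Q x + (1 - x)" for x unfolding P_def Q_def by (simp add: algebra_simps)
    have h_eq: "h x = real N * P x / Q x" if "Q x > 0" for x
    proof -
      have "1 - (K * (x - m) + C + S) / real N = Q x / real N" using rN unfolding QT by (simp add: field_simps)
      then have "h x = real N + (1 - x) / (Q x / real N)" unfolding h_def by simp
      also have "\<dots> = real N * P x / Q x" using that rN unfolding PQ by (simp add: field_simps)
      finally show ?thesis .
    qed
    have lnh: "ln (h x) = ln (real N) + (ln (P x) - ln (Q x))" if "Q x > 0" "x < 1" for x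
    proof -
      have "P x > 0" using that PQ by simp
      then show ?thesis using h_eq[OF that(1)] that rN by (simp add: ln_mult ln_div)
    qed
    have g_uns: "g x = h x" if "K * (x - m) + C + S \<le> D" for x
      using that unfolding g_def h_def by (simp add: min_def)
    have g_t0: "g t0 = real N + (1 - t0) / (1 - (den * t0 - K * m + C) / real N)"
      using g_uns[of t0] Tt0D unfolding h_def Tt0 by simp
    show ?thesis
    proof (cases "R \<ge> 0")
      case Rpos: True
      have Qpos: "Q x > 0" if "x < 1" for x
      proof -
        have "K * (1 - x) > 0" using K0 that by simp
        then show ?thesis unfolding Q_def using Rpos by simp
      qed
      define \<psi> where "\<psi> x = min (ln (G x)) (ln (real N) + (ln (R + (K+1) * (1 - x)) - ln (R + K * (1 - x))))" for x
      have lng: "ln (g x) = \<psi> x" if "x < 1" for x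
      proof -
        have gm: "g x = min (G x) (h x)"
          unfolding g_def G_def h_def
          by (rule g_min) (use rN DN Qpos[OF that] QT that in auto)
        have hp: "h x > 0" using h_eq[OF Qpos[OF that]] Qpos[OF that] PQ that rN by simp
        have Gp: "G x > 0" using G_pos that by simp
        have "ln (min (G x) (h x)) = min (ln (G x)) (ln (h x))"
          using hp Gp by (cases "G x \<le> h x") (auto simp: min_def)
        then show ?thesis unfolding gm \<psi>_def lnh[OF Qpos[OF that] that] P_def Q_def .
      qed
      have Gaff: "G x = (real N + 1 / (1 - D / real N)) + (- 1 / (1 - D / real N)) * x" for x
        unfolding G_def by (simp add: diff_divide_distrib algebra_simps)
      have cc: "concave_on {m..M} (\<lambda>x. ln (G x))"
        unfolding Gaff
      proof (rule ln_affine_concave)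
        fix x assume "x \<in> {m..M}"
        then have "G x > 0" using G_pos M1 by auto
        then show "0 < real N + 1 / (1 - D / real N) + - 1 / (1 - D / real N) * x" using Gaff by simp
      qed
      have cm: "concave_on {m..M} (\<lambda>x. ln (R + (K+1) * (1 - x)) - ln (R + K * (1 - x)))"
        by (rule mob_concave[OF K0 Rpos]) (use Qpos M1 in \<open>auto simp: Q_def\<close>)
      have cm2: "concave_on {m..M} (\<lambda>x. ln (real N) + (ln (R + (K+1) * (1 - x)) - ln (R + K * (1 - x))))"
        by (rule concave_on_add[OF _ cm]) (simp add: concave_on_const)
      have cpsi: "concave_on {m..M} \<psi>"
        unfolding \<psi>_def by (rule concave_on_min[OF cc cm2])
      have "(\<Sum>i<n. \<psi> (a i)) \<le> real n * \<psi> ((\<Sum>i<n. a i) / real n)"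
        by (rule jensen_concave[OF cpsi n0]) (use aR in auto)
      moreover have "(\<Sum>i<n. \<psi> (a i)) = (\<Sum>i<n. ln (g (a i)))"
        by (rule sum.cong) (simp_all add: lng a_lt1)
      moreover have "\<psi> ((\<Sum>i<n. a i) / real n) = ln (g t0)"
        using lng[of t0] t0_M M1 unfolding t0_def S_def by simp
      ultimately have "(\<Sum>i<n. ln (g (a i))) \<le> real n * ln (g t0)" by simp
      then have "(\<Prod>i<n. g (a i)) \<le> exp (real n * ln (g t0))"
        by (intro prod_le_exp) (use g_pos a1 in auto)
      also have "\<dots> = g t0 ^ n" using g_pos[of t0] t0_M M1 by (intro exp_pow_ln) auto
      finally have P1: "(\<Prod>i<n. g (a i)) \<le> g t0 ^ n" .
      have pr0: "pref eps N (m + C + S) \<ge> 0" using pref_ge1[OF eps sumN] by simp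
      have "fval eps N J m M c a \<le> pref eps N (m + C + S) * g t0 ^ n"
        unfolding fval_eq using P1 pr0 by (intro mult_left_mono) auto
      also have "\<dots> = fdiag eps N J m c t0"
        unfolding fdiag_eq g_t0 St0 ..
      finally show ?thesis using t0_lo t0_U unfolding U_def n_def by auto
    next
      case Rneg: False
      define th where "th = m + (D - C - S) / K"
      have Kth: "K * (th - m) = D - C - S" unfolding th_def using K0 by simp
      have t0th: "t0 < th"
      proof -
        have "K * (t0 - m) < K * (th - m)" using Kth Tt0D by linarith
        then show ?thesis using K0 by simp
      qed
      have mth: "m < th" using t0_lo t0th by simp
      have th1: "th < 1"
      proof -
        have "K * th < K * 1" using Kth Rneg DN unfolding R_def K_def by (simp add: algebra_simps)
        then show ?thesis using K0 by simp
      qed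
      have Tle: "K * (x - m) + C + S \<le> D" if "x \<le> th" for x
      proof -
        have "K * (x - m) \<le> K * (th - m)" using that K0 by simp
        then show ?thesis using Kth by linarith
      qed
      have Qpos: "Q x > 0" if "x \<le> th" for x using Tle[OF that] DN unfolding QT by linarith
      define \<phi> where "\<phi> x = ln (real N) + (ln (R + (K+1) * (1 - x)) - ln (R + K * (1 - x)))" for x
      have phi_h: "\<phi> x = ln (h x)" if "x \<le> th" for x
        using lnh[OF Qpos[OF that]] that th1 unfolding \<phi>_def P_def Q_def by simp
      have hpos: "h x > 0" if "x \<le> th" for x
        using h_eq[OF Qpos[OF that]] Qpos[OF that] PQ that th1 rN by simp
      have conv: "convex_on {m..th} \<phi>"
      proof -
        have cm: "convex_on {m..th} (\<lambda>x. ln (R + (K+1) * (1 - x)) - ln (R + K * (1 - x)))"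
          by (rule mob_convex[OF K0]) (use Rneg Qpos th1 in \<open>auto simp: Q_def\<close>)
        show ?thesis unfolding \<phi>_def by (rule convex_on_add[OF _ cm]) (simp add: convex_on_const)
      qed
      have mono: "\<phi> x \<le> \<phi> y" if "m \<le> x" "x \<le> y" "y \<le> th" for x y
      proof -
        have Qx: "Q x > 0" and Qy: "Q y > 0" using Qpos that by auto
        have "P x * Q y - P y * Q x = R * (y - x)" unfolding P_def Q_def by (simp add: algebra_simps)
        moreover have "R * (y - x) \<le> 0" using Rneg that by (simp add: mult_nonpos_nonneg)
        ultimately have "P x * Q y \<le> P y * Q x" by linarith
        then have "P x / Q x \<le> P y / Q y" using Qx Qy by (simp add: field_simps)
        then have "real N * P x / Q x \<le> real N * P y / Q y" using rN
          by (metis mult_left_mono of_nat_0_le_iff times_divide_eq_right)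
        then have "h x \<le> h y" using h_eq Qx Qy by simp
        then show ?thesis using phi_h hpos that by simp
      qed
      define x where "x i = min (a i) th" for i
      have hth: "h th = G th" unfolding h_def G_def using Kth by (simp add: algebra_simps)
      have lng_le: "ln (g (a i)) \<le> \<phi> (x i)" if "i < n" for i
      proof (cases "a i \<le> th")
        case True
        then show ?thesis using g_uns[OF Tle[OF True]] phi_h[OF True] unfolding x_def by simp
      next
        case False
        have "g (a i) \<le> G th" using g_le_G[OF a1[OF that]] G_anti[of th "a i"] False by simp
        then have "ln (g (a i)) \<le> ln (h th)" using hth g_pos[OF a1[OF that]] by simp
        then show ?thesis using phi_h[of th] False unfolding x_def by simp
      qed
      have xR: "\<forall>i<n. x i \<in> {m..th}" using aR mth unfolding x_def by auto
      have xS: "(\<Sum>i<n. x i) \<le> S" unfolding S_def x_def by (rule sum_mono) simp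
      have Sth: "S \<le> real n * th" using St0 t0th n0 by simp
      obtain k t where k: "k < n" and t: "t \<in> {m..th}" and kS: "(real n - real k - 1) * m + t + real k * th = S"
        and kphi: "(\<Sum>i<n. \<phi> (x i)) \<le> (real n - real k - 1) * \<phi> m + \<phi> t + real k * \<phi> th"
        using maj[OF conv mono n0 xR xS Sth] by blast
      have "(\<Sum>i<n. ln (g (a i))) \<le> (\<Sum>i<n. \<phi> (x i))" by (rule sum_mono) (use lng_le in auto)
      with kphi have "(\<Sum>i<n. ln (g (a i))) \<le> (real n - real k - 1) * \<phi> m + \<phi> t + real k * \<phi> th" by simp
      then have P1: "(\<Prod>i<n. g (a i)) \<le> exp ((real n - real k - 1) * \<phi> m + \<phi> t + real k * \<phi> th)"
        by (intro prod_le_exp) (use g_pos a1 in auto)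
      have rnk: "real n - real k - 1 = real (n - k - 1)" using k by (simp add: of_nat_diff)
      have E: "exp ((real n - real k - 1) * \<phi> m + \<phi> t + real k * \<phi> th) = h m ^ (n - k - 1) * h t * h th ^ k"
      proof -
        have "exp ((real n - real k - 1) * \<phi> m + \<phi> t + real k * \<phi> th)
            = exp (real (n - k - 1) * ln (h m)) * exp (ln (h t)) * exp (real k * ln (h th))"
          using phi_h[of m] phi_h[of t] phi_h[of th] mth t unfolding rnk by (simp add: exp_add)
        also have "\<dots> = h m ^ (n - k - 1) * h t * h th ^ k"
          using hpos[of m] hpos[of t] hpos[of th] mth t by (simp add: exp_pow_ln)
        finally show ?thesis .
      qed
      define B where "B = Bk N J m M c k t"
      have Beq: "B = th"
      proof -
        have rJ: "real N - real J - real k - 1 = real n - real k - 1" using rn by simp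
        have e: "(real N + real k - 2) * th = (real N - 1) * (M + m) - (C + (real N - real J - real k - 1) * m + t)"
        proof -
          have "(real N + real k - 2) * th = K * th + real k * th" unfolding K_def by (simp add: algebra_simps)
          moreover have "K * th = K * m + D - C - S" using Kth by (simp add: algebra_simps)
          moreover have "D + K * m = (real N - 1) * (M + m)" unfolding D_def K_def by (simp add: algebra_simps)
          ultimately show ?thesis unfolding rJ using kS by linarith
        qed
        have "real N + real k - 2 > 0" using rN by simp
        then show ?thesis unfolding B_def Bk_def C_def[symmetric] using e by (simp add: field_simps)
      qed
      have Skeq: "Sk N J m M c k t = C + S"
      proof -
        have "real N - real J - real k - 1 = real n - real k - 1" using rn by simp
        then show ?thesis unfolding Sk_def C_def[symmetric] B_def[symmetric] Beq using kS by (simp add: algebra_simps)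
      qed
      have pw: "int N - int J - int k - 1 = int (n - k - 1)" using k JN unfolding n_def by simp
      have fk_eq: "fk eps N J m M c k t = pref eps N (m + C + S) * h t * h m ^ (n - k - 1) * h th ^ k"
        unfolding fk_def Skeq B_def[symmetric] Beq pw power_int_of_nat hth
        unfolding h_def G_def D_def K_def by (simp add: algebra_simps)
      have pr0: "pref eps N (m + C + S) \<ge> 0" using pref_ge1[OF eps sumN] by simp
      have "fval eps N J m M c a \<le> pref eps N (m + C + S) * (h m ^ (n - k - 1) * h t * h th ^ k)"
        unfolding fval_eq using P1 E pr0 by (intro mult_left_mono) auto
      also have "\<dots> = fk eps N J m M c k t" unfolding fk_eq by (simp add: algebra_simps)
      finally have fin: "fval eps N J m M c a \<le> fk eps N J m M c k t" .
      have tU: "t \<le> Uk N J m M c k"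
      proof -
        have e: "(real N + real k - 2) * B = (real N - 1) * (M + m) - (C + (real N - real J - real k - 1) * m + t)"
          using rN unfolding B_def Bk_def C_def by simp
        have "(real N + real k - 1) * t \<le> (real N - 1) * (M + m) - (C + (real N - real J - real k - 1) * m)"
        proof -
          have "(real N + real k - 2) * t \<le> (real N + real k - 2) * B" using t Beq rN by (intro mult_left_mono) auto
          then show ?thesis using e by (simp add: algebra_simps)
        qed
        moreover have "real N + real k - 1 > 0" using rN by simp
        ultimately show ?thesis unfolding Uk_def C_def by (simp add: field_simps)
      qed
      show ?thesis using fin tU t k unfolding n_def by auto
    qed
  qed
qed

end
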